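(* Let $Y$ be a sofic shift and let $(G,L_G)$ be a right-resolving and regular labeled graph presenting $Y$. Then there is a labeled-graph homomorphism $\theta : (G,L_G) \to (\mathbb K(Y), L_{\mathbb K(Y)})$ such that the induced sliding block code satisfies $\theta(\mathcal R(L_G)) \subseteq \mathcal R(L_{\mathbb K(Y)})$, and $\theta(V_G)$ is a hereditary subset of $V_{\mathbb K(Y)}$. If furthermore $(G,L_G)$ is follower-separated, then $\theta$ is an isomorphism of labeled graphs from $(G,L_G)$ onto the hereditary labeled subgraph $(\mathbb K(Y)_{\theta(V_G)}, L_{\mathbb K(Y)})$.
   Context: A labeled graph $(G,L_G)$: finite directed graph $G$ (vertices $V_G$, edges $E_G$, source/terminal maps $s_G,t_G$), without sinks or sources, with labeling $L_G:E_G\to A$, $A$ a finite alphabet; $X_G$ is its edge shift; $L_G$ acts coordinatewise on paths; it presents $Y=L_G(X_G)$. $X_G[0,\infty)$ denotes right-infinite paths, $X_G(-\infty,-1]$ left-infinite paths $\cdots e_{-2}e_{-1}$; $s_G$ of a right-infinite path is the source of its first edge, $t_G$ of a left-infinite path is the terminal vertex of its last edge; $Y[0,\infty)=\{y_{[0,\infty)}:y\in Y\}$. Right-resolving: distinct edges with the same source have distinct labels. Follower set of a vertex: $f_G(v)=\{L_G(x):x\in X_G[0,\infty), s_G(x)=v\}$. For $y\in Y$: $F(y)=\{w\in Y[0,\infty): y_{(-\infty,-1]}w\in Y\}$. A vertex $v$ is regular if there is $z\in X_G$ with $t_G(z_{(-\infty,-1]})=v$ and $f_G(v)=F(L_G(z))$;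 the labeled graph is regular if all vertices are regular. Follower-separated: $f_G(v)=f_G(w)$ implies $v=w$. For a sliding block code $\pi:X\to Y$ and $x\in X$ let $\mathbb U(x)=\{z\in X: \exists N\ \forall i\le N,\ z_i=x_i\}$; $x$ is regular for $\pi$ if $\pi$ maps $\mathbb U(x)$ onto $\mathbb U(\pi(x))$; $\mathcal R(\pi)$ is the set of such points. Future cover $(\mathbb K(Y),L_{\mathbb K(Y)})$ of a sofic shift $Y\subseteq A^{\mathbb Z}$: vertices are the distinct sets $F(y)$, $y\in Y$ (finitely many); there is an edge labeled $a\in A$ from $F(y)$ to $F(z)$ exactly when $F(z)=\{w\in A^{\mathbb N}: aw\in F(y)\}$ (one such edge for each such pair and label). A labeled-graph homomorphism is a graph homomorphism (vertices to vertices, edges to edges, compatible with sources and terminals) preserving labels; it induces a sliding block code between the edge shifts. A set $U$ of vertices is hereditary if $s(e)\in U$ implies $t(e)\in U$ for every edge $e$; the hereditary labeled subgraph on $U$ has vertex set $U$ and all edges with source in $U$, with the restricted labeling. *)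

theory Defs
  imports Main
begin

definition labeled_graph :: "'v set \<Rightarrow> 'e set \<Rightarrow> ('e \<Rightarrow> 'v) \<Rightarrow> ('e \<Rightarrow> 'v) \<Rightarrow> bool" where
  "labeled_graph V E s t \<longleftrightarrow> finite V \<and> finite E \<and> (\<forall>e\<in>E. s e \<in> V \<and> t e \<in> V)
     \<and> (\<forall>v\<in>V. (\<exists>e\<in>E. s e = v) \<and> (\<exists>e\<in>E. t e = v))"

definition edge_shift :: "'e set \<Rightarrow> ('e \<Rightarrow> 'v) \<Rightarrow> ('e \<Rightarrow> 'v) \<Rightarrow> (int \<Rightarrow> 'e) set" where
  "edge_shift E s t = {x. \<forall>i. x i \<in> E \<and> t (x i) = s (x (i + 1))}"

definition right_paths :: "'e set \<Rightarrow> ('e \<Rightarrow> 'v) \<Rightarrow> ('e \<Rightarrow> 'v) \<Rightarrow> (nat \<Rightarrow> 'e) set" where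
  "right_paths E s t = {x. \<forall>n. x n \<in> E \<and> t (x n) = s (x (Suc n))}"

definition right_resolving :: "'e set \<Rightarrow> ('e \<Rightarrow> 'v) \<Rightarrow> ('e \<Rightarrow> 'a) \<Rightarrow> bool" where
  "right_resolving E s L \<longleftrightarrow> (\<forall>e1\<in>E. \<forall>e2\<in>E. s e1 = s e2 \<and> e1 \<noteq> e2 \<longrightarrow> L e1 \<noteq> L e2)"

definition follower_set :: "'e set \<Rightarrow> ('e \<Rightarrow> 'v) \<Rightarrow> ('e \<Rightarrow> 'v) \<Rightarrow> ('e \<Rightarrow> 'a) \<Rightarrow> 'v \<Rightarrow> (nat \<Rightarrow> 'a) set" where
  "follower_set E s t L v = {L \<circ> x | x. x \<in> right_paths E s t \<and> s (x 0) = v}"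

definition right_half :: "(int \<Rightarrow> 'a) set \<Rightarrow> (nat \<Rightarrow> 'a) set" where
  "right_half Y = {(\<lambda>n. y (int n)) | y. y \<in> Y}"

definition glue :: "(int \<Rightarrow> 'a) \<Rightarrow> (nat \<Rightarrow> 'a) \<Rightarrow> (int \<Rightarrow> 'a)" where
  "glue y w = (\<lambda>i. if i < 0 then y i else w (nat i))"

definition future :: "(int \<Rightarrow> 'a) set \<Rightarrow> (int \<Rightarrow> 'a) \<Rightarrow> (nat \<Rightarrow> 'a) set" where
  "future Y y = {w \<in> right_half Y. glue y w \<in> Y}"

definition regular_vertex ::
  "(int \<Rightarrow> 'a) set \<Rightarrow> 'e set \<Rightarrow> ('e \<Rightarrow> 'v) \<Rightarrow> ('e \<Rightarrow> 'v) \<Rightarrow> ('e \<Rightarrow> 'a) \<Rightarrow> 'v \<Rightarrow> bool" where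
  "regular_vertex Y E s t L v \<longleftrightarrow>
     (\<exists>z\<in>edge_shift E s t. t (z (-1)) = v \<and> follower_set E s t L v = future Y (L \<circ> z))"

definition regular_graph ::
  "(int \<Rightarrow> 'a) set \<Rightarrow> 'v set \<Rightarrow> 'e set \<Rightarrow> ('e \<Rightarrow> 'v) \<Rightarrow> ('e \<Rightarrow> 'v) \<Rightarrow> ('e \<Rightarrow> 'a) \<Rightarrow> bool" where
  "regular_graph Y V E s t L \<longleftrightarrow> (\<forall>v\<in>V. regular_vertex Y E s t L v)"

definition follower_separated ::
  "'v set \<Rightarrow> 'e set \<Rightarrow> ('e \<Rightarrow> 'v) \<Rightarrow> ('e \<Rightarrow> 'v) \<Rightarrow> ('e \<Rightarrow> 'a) \<Rightarrow> bool" where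
  "follower_separated V E s t L \<longleftrightarrow>
     (\<forall>v\<in>V. \<forall>w\<in>V. follower_set E s t L v = follower_set E s t L w \<longrightarrow> v = w)"

definition U_set :: "(int \<Rightarrow> 'b) set \<Rightarrow> (int \<Rightarrow> 'b) \<Rightarrow> (int \<Rightarrow> 'b) set" where
  "U_set X x = {z \<in> X. \<exists>N. \<forall>i\<le>N. z i = x i}"

definition regular_points ::
  "(int \<Rightarrow> 'b) set \<Rightarrow> (int \<Rightarrow> 'c) set \<Rightarrow> ((int \<Rightarrow> 'b) \<Rightarrow> (int \<Rightarrow> 'c)) \<Rightarrow> (int \<Rightarrow> 'b) set" where
  "regular_points X Y \<pi> = {x \<in> X. \<pi> ` U_set X x = U_set Y (\<pi> x)}"

type_synonym 'a fc_vertex = "(nat \<Rightarrow> 'a) set"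
type_synonym 'a fc_edge = "'a fc_vertex \<times> 'a \<times> 'a fc_vertex"

definition shift_cons :: "'a \<Rightarrow> (nat \<Rightarrow> 'a) \<Rightarrow> (nat \<Rightarrow> 'a)" where
  "shift_cons a w = (\<lambda>n. if n = 0 then a else w (n - 1))"

definition fc_vertices :: "(int \<Rightarrow> 'a) set \<Rightarrow> 'a fc_vertex set" where
  "fc_vertices Y = {future Y y | y. y \<in> Y}"

definition fc_edges :: "(int \<Rightarrow> 'a) set \<Rightarrow> 'a fc_edge set" where
  "fc_edges Y = {(P, a, Q) | P a Q. P \<in> fc_vertices Y \<and> Q \<in> fc_vertices Y
                     \<and> Q = {w. shift_cons a w \<in> P}}"

definition fc_src :: "'a fc_edge \<Rightarrow> 'a fc_vertex" where
  "fc_src e = fst e"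

definition fc_tgt :: "'a fc_edge \<Rightarrow> 'a fc_vertex" where
  "fc_tgt e = snd (snd e)"

definition fc_label :: "'a fc_edge \<Rightarrow> 'a" where
  "fc_label e = fst (snd e)"

definition lg_hom ::
  "'v set \<Rightarrow> 'e set \<Rightarrow> ('e \<Rightarrow> 'v) \<Rightarrow> ('e \<Rightarrow> 'v) \<Rightarrow> ('e \<Rightarrow> 'a) \<Rightarrow>
   'w set \<Rightarrow> 'f set \<Rightarrow> ('f \<Rightarrow> 'w) \<Rightarrow> ('f \<Rightarrow> 'w) \<Rightarrow> ('f \<Rightarrow> 'a) \<Rightarrow>
   ('v \<Rightarrow> 'w) \<Rightarrow> ('e \<Rightarrow> 'f) \<Rightarrow> bool" where
  "lg_hom V E s t L V' E' s' t' L' hv he \<longleftrightarrow>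
     (\<forall>v\<in>V. hv v \<in> V') \<and>
     (\<forall>e\<in>E. he e \<in> E' \<and> s' (he e) = hv (s e) \<and> t' (he e) = hv (t e) \<and> L' (he e) = L e)"

definition hereditary :: "'f set \<Rightarrow> ('f \<Rightarrow> 'w) \<Rightarrow> ('f \<Rightarrow> 'w) \<Rightarrow> 'w set \<Rightarrow> bool" where
  "hereditary E s t U \<longleftrightarrow> (\<forall>e\<in>E. s e \<in> U \<longrightarrow> t e \<in> U)"

text \<open>Isomorphism onto the hereditary labeled subgraph on U: a homomorphism that is
  bijective on vertices onto U and on edges onto the edges with source in U
  (its inverse is then automatically a labeled-graph homomorphism).\<close>
definition lg_iso_onto_sub ::
  "'v set \<Rightarrow> 'e set \<Rightarrow> ('e \<Rightarrow> 'v) \<Rightarrow> ('e \<Rightarrow> 'v) \<Rightarrow> ('e \<Rightarrow> 'a) \<Rightarrow>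
   'w set \<Rightarrow> 'f set \<Rightarrow> ('f \<Rightarrow> 'w) \<Rightarrow> ('f \<Rightarrow> 'w) \<Rightarrow> ('f \<Rightarrow> 'a) \<Rightarrow> 'w set \<Rightarrow>
   ('v \<Rightarrow> 'w) \<Rightarrow> ('e \<Rightarrow> 'f) \<Rightarrow> bool" where
  "lg_iso_onto_sub V E s t L V' E' s' t' L' U hv he \<longleftrightarrow>
     U \<subseteq> V' \<and>
     lg_hom V E s t L U {e\<in>E'. s' e \<in> U} s' t' L' hv he \<and>
     bij_betw hv V U \<and> bij_betw he E {e\<in>E'. s' e \<in> U}"

end

theory Submission
  imports Defs
begin

primrec chain :: "('e \<Rightarrow> nat \<Rightarrow> bool) \<Rightarrow> ('e\<Rightarrow>'v) \<Rightarrow> ('e \<Rightarrow> 'v) \<Rightarrow> 'v \<Rightarrow> nat \<Rightarrow> 'e" where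
  "chain P s t v 0 = (SOME e. s e = v \<and> P e 0)"
| "chain P s t v (Suc k) = (SOME e. s e = t (chain P s t v k) \<and> P e (Suc k))"

locale setting =
  fixes V :: "'v set" and E :: "'e set" and s t :: "'e \<Rightarrow> 'v" and L :: "'e \<Rightarrow> 'a"
    and Y :: "(int \<Rightarrow> 'a) set"
  assumes graph: "labeled_graph V E s t"
    and presents: "Y = (\<lambda>x. L \<circ> x) ` edge_shift E s t"
    and rr: "right_resolving E s L"
    and reg: "regular_graph Y V E s t L"
begin

abbreviation hv where "hv \<equiv> follower_set E s t L"
abbreviation he where "he \<equiv> (\<lambda>e. (hv (s e), L e, hv (t e)))"

lemma inV: "e \<in> E \<Longrightarrow> s e \<in> V \<and> t e \<in> V"
  using graph unfolding labeled_graph_def by blast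

lemma hv_vert: "v \<in> V \<Longrightarrow> hv v \<in> fc_vertices Y"
proof -
  assume "v \<in> V"
  then obtain z where z: "z \<in> edge_shift E s t" "hv v = future Y (L \<circ> z)"
    using reg unfolding regular_graph_def regular_vertex_def by blast
  then have "L \<circ> z \<in> Y" using presents by blast
  then show ?thesis using z unfolding fc_vertices_def by blast
qed

lemma future_ne: "y \<in> Y \<Longrightarrow> (\<lambda>n. y (int n)) \<in> future Y y"
proof -
  assume y: "y \<in> Y"
  have "glue y (\<lambda>n. y (int n)) = y" unfolding glue_def by (rule ext) auto
  then show ?thesis using y unfolding future_def right_half_def by auto
qed

lemma hv_step: assumes e: "e \<in> E"
  shows "hv (t e) = {w. shift_cons (L e) w \<in> hv (s e)}"
proof (intro set_eqI iffI)
  fix w assume "w \<in> hv (t e)"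
  then obtain x where x: "w = L \<circ> x" "x \<in> right_paths E s t" "s (x 0) = t e"
    unfolding follower_set_def by blast
  define x' where "x' = shift_cons e x"
  have "x' \<in> right_paths E s t" using x e unfolding right_paths_def x'_def shift_cons_def
    by (auto split: nat.splits)
  moreover have "L \<circ> x' = shift_cons (L e) w" using x unfolding x'_def shift_cons_def
    by (rule_tac ext) auto
  moreover have "s (x' 0) = s e" unfolding x'_def shift_cons_def by simp
  ultimately show "w \<in> {w. shift_cons (L e) w \<in> hv (s e)}" unfolding follower_set_def
    by (metis (mono_tags, lifting) mem_Collect_eq)
next
  fix w assume "w \<in> {w. shift_cons (L e) w \<in> hv (s e)}"
  then obtain x where x: "shift_cons (L e) w = L \<circ> x" "x \<in> right_paths E s t" "s (x 0) = s e"
    unfolding follower_set_def by blast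
  have x0: "x 0 \<in> E" using x unfolding right_paths_def by blast
  have "L (x 0) = L e" using fun_cong[OF x(1), of 0] by (simp add: shift_cons_def)
  then have "x 0 = e" using rr x0 e x(3) unfolding right_resolving_def by blast
  have "x \<circ> Suc \<in> right_paths E s t" using x(2) unfolding right_paths_def by auto
  moreover have "s ((x \<circ> Suc) 0) = t e" using x(2) \<open>x 0 = e\<close> unfolding right_paths_def by auto
  moreover have "L \<circ> (x \<circ> Suc) = w" proof
    fix n show "(L \<circ> (x \<circ> Suc)) n = w n" using fun_cong[OF x(1), of "Suc n"] by (simp add: shift_cons_def)
  qed
  ultimately show "w \<in> hv (t e)" unfolding follower_set_def by force
qed

lemma he_edge: "e \<in> E \<Longrightarrow> he e \<in> fc_edges Y"
proof -
  assume e: "e \<in> E"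
  have "hv (t e) \<in> fc_vertices Y" "hv (s e) \<in> fc_vertices Y" using hv_vert inV[OF e] by auto
  then show ?thesis using hv_step[OF e] unfolding fc_edges_def by auto
qed

lemma lift_edge: assumes v: "v \<in> V" and f: "f \<in> fc_edges Y" and fs: "fc_src f = hv v"
  shows "\<exists>e\<in>E. s e = v \<and> he e = f"
proof -
  obtain P a Q where f': "f = (P, a, Q)" "Q \<in> fc_vertices Y" "Q = {w. shift_cons a w \<in> P}"
    using f unfolding fc_edges_def by blast
  have P: "P = hv v" using fs f' by (simp add: fc_src_def)
  obtain y where y: "y \<in> Y" "Q = future Y y" using f' unfolding fc_vertices_def by blast
  then have "(\<lambda>n. y (int n)) \<in> Q" using future_ne by blast
  then have "shift_cons a (\<lambda>n. y (int n)) \<in> hv v" using f' P by blast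
  then obtain x where x: "shift_cons a (\<lambda>n. y (int n)) = L \<circ> x" "x \<in> right_paths E s t" "s (x 0) = v"
    unfolding follower_set_def by blast
  have x0: "x 0 \<in> E" using x unfolding right_paths_def by blast
  have "L (x 0) = a" using fun_cong[OF x(1), of 0] by (simp add: shift_cons_def)
  then have "he (x 0) = f" using hv_step[OF x0] f' P x(3) by simp
  then show ?thesis using x0 x(3) by blast
qed

lemma he_shift: "x \<in> edge_shift E s t \<Longrightarrow> (\<lambda>i. he (x i)) \<in> edge_shift (fc_edges Y) fc_src fc_tgt"
  unfolding edge_shift_def using he_edge by (auto simp: fc_src_def fc_tgt_def) metis

lemma lift_path:
  assumes z: "z \<in> edge_shift (fc_edges Y) fc_src fc_tgt" and v: "v \<in> V" and zs: "fc_src (z m) = hv v"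
  shows "\<exists>g. (\<forall>k. g k \<in> E \<and> he (g k) = z (m + int k) \<and> t (g k) = s (g (Suc k))) \<and> s (g 0) = v"
proof -
  define P where "P = (\<lambda>e k. e \<in> E \<and> he e = z (m + int k))"
  define g where "g = chain P s t v"
  have zE: "\<And>i. z i \<in> fc_edges Y" and zc: "\<And>i. fc_tgt (z i) = fc_src (z (i+1))"
    using z unfolding edge_shift_def by auto
  have inv: "P (g k) k \<and> (k = 0 \<longrightarrow> s (g 0) = v) \<and> (\<forall>j. k = Suc j \<longrightarrow> s (g k) = t (g j))" for k
  proof (induction k)
    case 0
    have "\<exists>e. s e = v \<and> P e 0" using lift_edge[OF v zE[of m]] zs unfolding P_def by auto
    then show ?case unfolding g_def using someI_ex[of "\<lambda>e. s e = v \<and> P e 0"] by simp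
  next
    case (Suc k)
    then have gk: "g k \<in> E" "he (g k) = z (m + int k)" unfolding P_def by auto
    have "fc_src (z (m + int (Suc k))) = hv (t (g k))"
    proof -
      have e: "m + int (Suc k) = m + int k + 1" by simp
      have "fc_src (z (m + int k + 1)) = hv (t (g k))" using zc[of "m + int k"] gk(2)[symmetric] by (simp add: fc_tgt_def)
      then show ?thesis unfolding e .
    qed
    then have "\<exists>e. s e = t (g k) \<and> P e (Suc k)"
      using lift_edge[OF _ zE[of "m + int (Suc k)"]] inV[OF gk(1)] unfolding P_def by auto
    then show ?case unfolding g_def using someI_ex[of "\<lambda>e. s e = t (g k) \<and> P e (Suc k)"] by (simp add: g_def)
  qed
  show ?thesis
    by (rule exI[of _ g]) (use inv in \<open>auto simp: P_def\<close>)
qed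

lemma lab_he: "fc_label \<circ> (he \<circ> x) = L \<circ> x"
  by (rule ext) (simp add: fc_label_def)

lemma regpts: assumes x: "x \<in> regular_points (edge_shift E s t) Y (\<lambda>x. L \<circ> x)"
  shows "he \<circ> x \<in> regular_points (edge_shift (fc_edges Y) fc_src fc_tgt) Y (\<lambda>x. fc_label \<circ> x)"
proof -
  have xE: "x \<in> edge_shift E s t" and xr: "(\<lambda>x. L \<circ> x) ` U_set (edge_shift E s t) x = U_set Y (L \<circ> x)"
    using x unfolding regular_points_def by auto
  have hx: "he \<circ> x \<in> edge_shift (fc_edges Y) fc_src fc_tgt" using he_shift[OF xE] by (simp add: comp_def)
  have "(\<lambda>x. fc_label \<circ> x) ` U_set (edge_shift (fc_edges Y) fc_src fc_tgt) (he \<circ> x) = U_set Y (L \<circ> x)"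
  proof (intro set_eqI iffI)
    fix w assume "w \<in> (\<lambda>x. fc_label \<circ> x) ` U_set (edge_shift (fc_edges Y) fc_src fc_tgt) (he \<circ> x)"
    then obtain z where z0: "w = fc_label \<circ> z" "z \<in> U_set (edge_shift (fc_edges Y) fc_src fc_tgt) (he \<circ> x)"
      by (rule imageE)
    then obtain N where z: "w = fc_label \<circ> z" "z \<in> edge_shift (fc_edges Y) fc_src fc_tgt"
      "\<And>i. i \<le> N \<Longrightarrow> z i = he (x i)"
      unfolding U_set_def by auto
    have xiE: "\<And>i. x i \<in> E" and xc: "\<And>i. t (x i) = s (x (i+1))" using xE unfolding edge_shift_def by auto
    have "fc_src (z (N+1)) = hv (t (x N))"
    proof -
      have "fc_src (z (N+1)) = fc_tgt (z N)" using z(2) unfolding edge_shift_def by auto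
      then show ?thesis using z(3)[of N] by (simp add: fc_tgt_def)
    qed
    then obtain g where g: "\<And>k. g k \<in> E" "\<And>k. he (g k) = z (N + 1 + int k)"
      "\<And>k. t (g k) = s (g (Suc k))" "s (g 0) = t (x N)"
      using lift_path[OF z(2) conjunct2[OF inV[OF xiE[of N]]]] by blast
    define x' where "x' = (\<lambda>i. if i \<le> N then x i else g (nat (i - N - 1)))"
    have "x' \<in> edge_shift E s t"
      unfolding edge_shift_def
    proof (intro CollectI allI conjI)
      fix i
      show "x' i \<in> E" unfolding x'_def using xiE g(1) by auto
      show "t (x' i) = s (x' (i + 1))"
      proof (cases "i < N")
        case True then show ?thesis unfolding x'_def using xc by auto
      next
        case False
        show ?thesis
        proof (cases "i = N")
          case True then show ?thesis unfolding x'_def using g(4) by auto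
        next
          case False
          then have "i > N" using \<open>\<not> i < N\<close> by auto
          then have "nat (i + 1 - N - 1) = Suc (nat (i - N - 1))" by auto
          then show ?thesis unfolding x'_def using g(3) \<open>i > N\<close> by auto
        qed
      qed
    qed
    moreover have "\<forall>i\<le>N. x' i = x i" unfolding x'_def by auto
    ultimately have "x' \<in> U_set (edge_shift E s t) x" unfolding U_set_def by auto
    then have "L \<circ> x' \<in> U_set Y (L \<circ> x)" using xr by blast
    moreover have "he \<circ> x' = z"
    proof
      fix i show "(he \<circ> x') i = z i"
      proof (cases "i \<le> N")
        case True then show ?thesis using z(3) unfolding x'_def by auto
      next
        case False
        then have "N + 1 + int (nat (i - N - 1)) = i" by auto
        then show ?thesis using g(2)[of "nat (i - N - 1)"] False unfolding x'_def by auto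
      qed
    qed
    ultimately show "w \<in> U_set Y (L \<circ> x)" using z(1) lab_he[of x'] by simp
  next
    fix w assume "w \<in> U_set Y (L \<circ> x)"
    then obtain x' where x': "w = L \<circ> x'" "x' \<in> U_set (edge_shift E s t) x" using xr by blast
    then obtain N where N: "x' \<in> edge_shift E s t" "\<And>i. i \<le> N \<Longrightarrow> x' i = x i" unfolding U_set_def by auto
    have "he \<circ> x' \<in> U_set (edge_shift (fc_edges Y) fc_src fc_tgt) (he \<circ> x)"
    proof -
      have "\<forall>i\<le>N. (he \<circ> x') i = (he \<circ> x) i" using N(2) by simp
      moreover have "he \<circ> x' \<in> edge_shift (fc_edges Y) fc_src fc_tgt"
        using he_shift[OF N(1)] by (simp add: comp_def)
      ultimately show ?thesis unfolding U_set_def by blast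
    qed
    moreover have "w = (\<lambda>x. fc_label \<circ> x) (he \<circ> x')" using x'(1) lab_he[of x'] by simp
    ultimately show "w \<in> (\<lambda>x. fc_label \<circ> x) ` U_set (edge_shift (fc_edges Y) fc_src fc_tgt) (he \<circ> x)"
      by blast
  qed
  then show ?thesis using hx lab_he[of x] unfolding regular_points_def by simp
qed

lemma hered: "hereditary (fc_edges Y) fc_src fc_tgt (hv ` V)"
  unfolding hereditary_def
proof (intro ballI impI)
  fix f assume f: "f \<in> fc_edges Y" "fc_src f \<in> hv ` V"
  then obtain v where v: "v \<in> V" "fc_src f = hv v" by blast
  then obtain e where "e \<in> E" "s e = v" "he e = f" using lift_edge f by blast
  then show "fc_tgt f \<in> hv ` V" using inV[of e] by (auto simp: fc_tgt_def)
qed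

lemma hom: "lg_hom V E s t L (fc_vertices Y) (fc_edges Y) fc_src fc_tgt fc_label hv he"
  unfolding lg_hom_def using hv_vert he_edge by (auto simp: fc_src_def fc_tgt_def fc_label_def)

lemma iso: assumes fs: "follower_separated V E s t L"
  shows "lg_iso_onto_sub V E s t L (fc_vertices Y) (fc_edges Y) fc_src fc_tgt fc_label (hv ` V) hv he"
proof -
  have injv: "inj_on hv V" using fs unfolding follower_separated_def inj_on_def by blast
  have "inj_on he E"
  proof (rule inj_onI)
    fix e1 e2 assume e: "e1 \<in> E" "e2 \<in> E" "he e1 = he e2"
    then have "s e1 = s e2" using injv inV[of e1] inV[of e2] unfolding inj_on_def by auto
    then show "e1 = e2" using e rr unfolding right_resolving_def by auto
  qed
  moreover have "he ` E = {f \<in> fc_edges Y. fc_src f \<in> hv ` V}"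
  proof (intro set_eqI iffI)
    fix f assume "f \<in> he ` E" then show "f \<in> {f \<in> fc_edges Y. fc_src f \<in> hv ` V}"
      using he_edge inV by (auto simp: fc_src_def)
  next
    fix f assume f: "f \<in> {f \<in> fc_edges Y. fc_src f \<in> hv ` V}"
    then obtain v where "v \<in> V" "fc_src f = hv v" by blast
    then show "f \<in> he ` E" using lift_edge f by blast
  qed
  ultimately have "bij_betw he E {f \<in> fc_edges Y. fc_src f \<in> hv ` V}" unfolding bij_betw_def by blast
  moreover have "bij_betw hv V (hv ` V)" using injv by (simp add: bij_betw_def)
  moreover have "hv ` V \<subseteq> fc_vertices Y" using hv_vert by blast
  moreover have "lg_hom V E s t L (hv ` V) {f \<in> fc_edges Y. fc_src f \<in> hv ` V} fc_src fc_tgt fc_label hv he"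
    unfolding lg_hom_def using he_edge inV by (auto simp: fc_src_def fc_tgt_def fc_label_def)
  ultimately show ?thesis unfolding lg_iso_onto_sub_def by blast
qed

end
theorem proposition3p1:
  fixes V :: "'v set" and E :: "'e set" and s t :: "'e \<Rightarrow> 'v" and L :: "'e \<Rightarrow> 'a"
    and Y :: "(int \<Rightarrow> 'a) set"
  assumes graph: "labeled_graph V E s t"
    and presents: "Y = (\<lambda>x. L \<circ> x) ` edge_shift E s t"
    and rr: "right_resolving E s L"
    and reg: "regular_graph Y V E s t L"
  shows "\<exists>(hv :: 'v \<Rightarrow> 'a fc_vertex) (he :: 'e \<Rightarrow> 'a fc_edge).
     lg_hom V E s t L (fc_vertices Y) (fc_edges Y) fc_src fc_tgt fc_label hv he
   \<and> (\<lambda>x. he \<circ> x) ` regular_points (edge_shift E s t) Y (\<lambda>x. L \<circ> x)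
       \<subseteq> regular_points (edge_shift (fc_edges Y) fc_src fc_tgt) Y (\<lambda>x. fc_label \<circ> x)
   \<and> hereditary (fc_edges Y) fc_src fc_tgt (hv ` V)
   \<and> (follower_separated V E s t L \<longrightarrow>
        lg_iso_onto_sub V E s t L (fc_vertices Y) (fc_edges Y) fc_src fc_tgt fc_label (hv ` V) hv he)"
proof -
  interpret setting V E s t L Y using assms by (unfold_locales)
  show ?thesis using hom regpts hered iso by blast
qed

end
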